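(* Let $K$ be a non-planar continuum. Then $T(x)\subset S(x)$ for every $x\in K$.
   Context: For a compactum $K$ and $A\subset K$, $T(A)$ is the set of all $y\in K$ for which there do not exist both an open set $Q\subset K$ and a continuum $W$ with $y\in Q\subset W\subset K\setminus A$; $T(x)=T(\{x\})$. $S(x)$ is the set of all $y\in K$ for which there do NOT exist two disjoint open sets $U_x,U_y\subset K$ with $x\in U_x$, $y\in U_y$ such that $K\setminus(U_x\cup U_y)$ has at most finitely many components intersecting both $\partial U_x$ and $\partial U_y$. *)

theory Defs
  imports "HOL-Analysis.Analysis"
begin

definition continuum_in :: "'a topology \<Rightarrow> 'a set \<Rightarrow> bool" where
  "continuum_in X W \<longleftrightarrow> W \<subseteq> topspace X \<and> W \<noteq> {} \<and> compactin X W \<and> connectedin X W"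

definition T_set :: "'a topology \<Rightarrow> 'a set \<Rightarrow> 'a set" where
  "T_set X A = {y \<in> topspace X. \<not> (\<exists>Q W. openin X Q \<and> continuum_in X W \<and>
        y \<in> Q \<and> Q \<subseteq> W \<and> W \<subseteq> topspace X - A)}"

definition S_set :: "'a topology \<Rightarrow> 'a \<Rightarrow> 'a set" where
  "S_set X x = {y \<in> topspace X. \<not> (\<exists>Ux Uy. openin X Ux \<and> openin X Uy \<and> Ux \<inter> Uy = {} \<and>
        x \<in> Ux \<and> y \<in> Uy \<and>
        finite {C \<in> connected_components_of (subtopology X (topspace X - (Ux \<union> Uy))).
                  C \<inter> (X frontier_of Ux) \<noteq> {} \<and> C \<inter> (X frontier_of Uy) \<noteq> {}})}"

definition planar_space :: "'a topology \<Rightarrow> bool" where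
  "planar_space X \<longleftrightarrow> (\<exists>f :: 'a \<Rightarrow> real^2. embedding_map X euclidean f)"

end

theory Submission
  imports Defs
begin

lemma bump2:
  assumes H: "Hausdorff_space X" and cX: "compact_space X"
    and D: "closedin X D" "connectedin X D" "D \<inter> U \<noteq> {}"
    and U: "openin X U" and p: "p \<in> D - U"
  shows "connected_component_of_set (subtopology X (D - U)) p \<inter> X frontier_of U \<noteq> {}"
proof -
  let ?Y = "subtopology X D"
  let ?E = "connected_component_of_set (subtopology X (D - U)) p"
  have Dsub: "D \<subseteq> topspace X" using D closedin_subset by blast
  have tY: "topspace ?Y = D" using Dsub by auto
  have cY: "connected_space ?Y" using D connected_space_subtopology by blast
  have kY: "compact_space ?Y" using closedin_compact_space[OF cX D(1)] compact_space_subtopology by blast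
  have hY: "Hausdorff_space ?Y" using H Hausdorff_space_subtopology by blast
  have clY: "closedin ?Y (D - U)"
  proof -
    have "closedin X (D - U)" using D(1) U by (simp add: closedin_diff)
    then show ?thesis by (simp add: closedin_closed_subtopology[OF D(1)] Diff_subset)
  qed
  have neY: "D - U \<noteq> topspace ?Y" using tY D(3) by auto
  have sub: "subtopology ?Y (D - U) = subtopology X (D - U)"
    by (simp add: subtopology_subtopology Int_absorb1)
  have Ecomp: "?E \<in> connected_components_of (subtopology ?Y (D - U))"
  proof -
    have "p \<in> topspace (subtopology X (D - U))" using p Dsub by auto
    then show ?thesis using sub by (simp only: connected_component_in_connected_components_of)
  qed
  have bb: "?E \<inter> ?Y frontier_of (D - U) \<noteq> {}"
    by (rule boundary_bumping_theorem_closed[OF cY kY hY clY neY Ecomp])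
  then obtain q0 where q0: "q0 \<in> ?E \<inter> ?Y frontier_of (D - U)" by (meson ex_in_conv)
  then have q: "q0 \<in> ?E" "q0 \<in> ?Y frontier_of (D - U)" by (simp_all only: Int_iff)
  define q where "q = q0"
  note q = q[folded q_def]
  have qDU: "q \<in> D - U"
  proof -
    have "?E \<subseteq> topspace (subtopology X (D - U))" by (rule connected_component_of_subset_topspace)
    then show ?thesis using q(1) by auto
  qed
  have qnotint: "q \<notin> ?Y interior_of (D - U)" using q(2) by (simp add: frontier_of_def)
  have "q \<in> X closure_of U"
    unfolding in_closure_of
  proof (intro conjI allI impI)
    show "q \<in> topspace X" using qDU Dsub by blast
    fix T assume T: "q \<in> T \<and> openin X T"
    show "\<exists>y. y \<in> U \<and> y \<in> T"
    proof (rule ccontr)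
      assume "\<not> (\<exists>y. y \<in> U \<and> y \<in> T)"
      then have "T \<inter> D \<subseteq> D - U" by blast
      moreover have "openin ?Y (T \<inter> D)" using T by (metis openin_subtopology_Int)
      moreover have "q \<in> T \<inter> D" using T qDU by blast
      ultimately have "q \<in> ?Y interior_of (D - U)"
        unfolding interior_of_def by blast
      then show False using qnotint by blast
    qed
  qed
  moreover have "q \<notin> X interior_of U"
  proof -
    have "X interior_of U \<subseteq> U" by (rule interior_of_subset)
    then show ?thesis using qDU by blast
  qed
  ultimately have "q \<in> X frontier_of U" by (simp add: frontier_of_def)
  then show ?thesis using q(1) by blast
qed


lemma comp_eq_of_mem:
  assumes "D \<in> connected_components_of Y" "e \<in> D"
  shows "connected_component_of_set Y e = D"
proof
  have eY: "e \<in> topspace Y" using assms connected_components_of_subset by blast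
  have cD: "connectedin Y D" using assms(1) by (rule connectedin_connected_components_of)
  show "D \<subseteq> connected_component_of_set Y e"
    using connected_component_of_maximal[OF cD assms(2)] .
  have "\<not> disjnt D (connected_component_of_set Y e)"
    using eY assms(2) connected_component_of_refl[of Y e] unfolding disjnt_def by blast
  then show "connected_component_of_set Y e \<subseteq> D"
    using connected_components_of_maximal[OF assms(1) connectedin_connected_component_of] by blast
qed

lemma bump1:
  assumes H: "Hausdorff_space X" and cX: "compact_space X" and conX: "connected_space X"
    and Ux: "openin X Ux" and Uy: "openin X Uy" and dis: "Ux \<inter> Uy = {}" and x: "x \<in> Ux"
    and D: "D \<in> connected_components_of (subtopology X (topspace X - Ux))"
    and DU: "D \<inter> Uy \<noteq> {}"
  shows "\<exists>E \<in> {C \<in> connected_components_of (subtopology X (topspace X - (Ux \<union> Uy))).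
                  C \<inter> (X frontier_of Ux) \<noteq> {} \<and> C \<inter> (X frontier_of Uy) \<noteq> {}}. E \<subseteq> D"
proof -
  let ?S = "topspace X - Ux"
  let ?F = "topspace X - (Ux \<union> Uy)"
  have clS: "closedin X ?S" using Ux by blast
  have xX: "x \<in> topspace X" using Ux x openin_subset by blast
  have neS: "?S \<noteq> topspace X" using xX x by blast
  have Dsub0: "D \<subseteq> topspace (subtopology X ?S)"
    using D by (rule connected_components_of_subset)
  then have DS: "D \<subseteq> ?S" by auto
  have clD0: "closedin (subtopology X ?S) D" using D by (rule closedin_connected_components_of)
  have clD: "closedin X D" using clD0 closedin_closed_subtopology[OF clS] by blast
  have cDS: "connectedin (subtopology X ?S) D" using D by (rule connectedin_connected_components_of)
  then have cD: "connectedin X D" by (simp add: connectedin_subtopology)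
  have bb: "D \<inter> X frontier_of ?S \<noteq> {}"
    by (rule boundary_bumping_theorem_closed[OF conX cX H clS neS D])
  have fr: "X frontier_of ?S = X frontier_of Ux" by (rule frontier_of_complement)
  obtain p where p: "p \<in> D" "p \<in> X frontier_of Ux" using bb fr by (metis ex_in_conv Int_iff)
  have pcl: "p \<in> X closure_of Ux"
    using p(2) unfolding frontier_of_def by (simp only: Diff_iff)
  have pUy: "p \<notin> Uy"
  proof
    assume "p \<in> Uy"
    then obtain y where "y \<in> Ux" "y \<in> Uy" using pcl Uy unfolding in_closure_of by blast
    then show False using dis by blast
  qed
  have pX: "p \<in> topspace X" using p(1) DS by blast
  have pF: "p \<in> ?F" using pX p(1) DS pUy by blast
  let ?E = "connected_component_of_set (subtopology X (D - Uy)) p"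
  let ?E' = "connected_component_of_set (subtopology X ?F) p"
  have E'comp: "?E' \<in> connected_components_of (subtopology X ?F)"
  proof -
    have "p \<in> topspace (subtopology X ?F)" using pF by simp
    then show ?thesis by (simp only: connected_component_in_connected_components_of)
  qed
  have cE': "connectedin (subtopology X ?F) ?E'" by (rule connectedin_connected_component_of)
  have E'F: "?E' \<subseteq> ?F" using connected_component_of_subset_topspace[of "subtopology X ?F" p] by auto
  have cE'X: "connectedin X ?E'" using cE' by (simp add: connectedin_subtopology)
  have pE': "p \<in> ?E'" using pF connected_component_of_refl[of "subtopology X ?F" p] by simp
  have "connectedin (subtopology X ?S) ?E'" using cE'X E'F by (auto simp: connectedin_subtopology)
  moreover have "\<not> disjnt D ?E'" using p(1) pE' unfolding disjnt_def by blast
  ultimately have E'D: "?E' \<subseteq> D" using connected_components_of_maximal[OF D] by blast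
  have "?E \<inter> X frontier_of Uy \<noteq> {}"
    by (rule bump2[OF H cX clD cD DU Uy]) (use p(1) pUy in blast)
  moreover have "?E \<subseteq> ?E'"
  proof -
    have "connectedin (subtopology X (D - Uy)) ?E" by (rule connectedin_connected_component_of)
    then have cEX: "connectedin X ?E" by (simp add: connectedin_subtopology)
    have "?E \<subseteq> topspace (subtopology X (D - Uy))" by (rule connected_component_of_subset_topspace)
    then have "?E \<subseteq> ?F" using DS by auto
    then have "connectedin (subtopology X ?F) ?E" using cEX by (simp add: connectedin_subtopology)
    moreover have "p \<in> ?E" using p(1) pUy pX connected_component_of_refl[of "subtopology X (D - Uy)" p] by simp
    ultimately show ?thesis by (rule connected_component_of_maximal)
  qed
  ultimately have "?E' \<inter> X frontier_of Uy \<noteq> {}" by blast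
  moreover have "?E' \<inter> X frontier_of Ux \<noteq> {}" using pE' p(2) by blast
  ultimately show ?thesis using E'comp E'D by blast
qed


theorem theorem9p7:
  fixes X :: "'a topology" and x :: 'a
  assumes "metrizable_space X" and "compact_space X" and "connected_space X"
    and "topspace X \<noteq> {}"
    and "\<not> planar_space X"
    and "x \<in> topspace X"
  shows "T_set X {x} \<subseteq> S_set X x"
proof
  fix y assume yT: "y \<in> T_set X {x}"
  have H: "Hausdorff_space X" using assms(1) by (rule metrizable_imp_Hausdorff_space)
  have yX: "y \<in> topspace X" using yT unfolding T_set_def by blast
  have noQW: "\<not> (\<exists>Q W. openin X Q \<and> continuum_in X W \<and> y \<in> Q \<and> Q \<subseteq> W \<and> W \<subseteq> topspace X - {x})"
    using yT unfolding T_set_def by blast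
  show "y \<in> S_set X x"
    unfolding S_set_def
  proof (intro CollectI conjI notI yX)
    assume "\<exists>Ux Uy. openin X Ux \<and> openin X Uy \<and> Ux \<inter> Uy = {} \<and>
        x \<in> Ux \<and> y \<in> Uy \<and>
        finite {C \<in> connected_components_of (subtopology X (topspace X - (Ux \<union> Uy))).
                  C \<inter> (X frontier_of Ux) \<noteq> {} \<and> C \<inter> (X frontier_of Uy) \<noteq> {}}"
    then obtain Ux Uy where Ux: "openin X Ux" and Uy: "openin X Uy" and dis: "Ux \<inter> Uy = {}"
      and x: "x \<in> Ux" and y: "y \<in> Uy"
      and fin: "finite {C \<in> connected_components_of (subtopology X (topspace X - (Ux \<union> Uy))).
                  C \<inter> (X frontier_of Ux) \<noteq> {} \<and> C \<inter> (X frontier_of Uy) \<noteq> {}}" by blast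
    define \<E> where "\<E> = {C \<in> connected_components_of (subtopology X (topspace X - (Ux \<union> Uy))).
                  C \<inter> (X frontier_of Ux) \<noteq> {} \<and> C \<inter> (X frontier_of Uy) \<noteq> {}}"
    let ?S = "topspace X - Ux"
    let ?Y = "subtopology X ?S"
    define \<D> where "\<D> = {D \<in> connected_components_of ?Y. D \<inter> Uy \<noteq> {}}"
    define g where "g = (\<lambda>E. connected_component_of_set ?Y (SOME e. e \<in> E))"
    have clS: "closedin X ?S" using Ux by blast
    have "\<D> \<subseteq> g ` \<E>"
    proof
      fix D assume "D \<in> \<D>"
      then have D: "D \<in> connected_components_of ?Y" "D \<inter> Uy \<noteq> {}" unfolding \<D>_def by auto
      obtain E where E: "E \<in> \<E>" "E \<subseteq> D"
        using bump1[OF H assms(2) assms(3) Ux Uy dis x D] unfolding \<E>_def by blast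
      have "E \<noteq> {}" using E(1) unfolding \<E>_def using nonempty_connected_components_of by blast
      then have "(SOME e. e \<in> E) \<in> E" by (simp add: some_in_eq ex_in_conv)
      then have "g E = D" unfolding g_def using comp_eq_of_mem[OF D(1)] E(2) by blast
      then show "D \<in> g ` \<E>" using E(1) by blast
    qed
    then have finD: "finite \<D>" using fin unfolding \<E>_def[symmetric] by (meson finite_surj)
    have yS: "y \<in> ?S" using yX y dis by blast
    define D0 where "D0 = connected_component_of_set ?Y y"
    have D0comp: "D0 \<in> connected_components_of ?Y"
    proof -
      have "y \<in> topspace ?Y" using yS by simp
      then show ?thesis unfolding D0_def by (simp only: connected_component_in_connected_components_of)
    qed
    have yD0: "y \<in> D0" unfolding D0_def using yS connected_component_of_refl[of ?Y y] by simp
    have D0D: "D0 \<in> \<D>" unfolding \<D>_def using D0comp yD0 y by blast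
    have clDs: "closedin X D" if "D \<in> \<D>" for D
    proof -
      have "closedin ?Y D" using that unfolding \<D>_def by (simp add: closedin_connected_components_of)
      then show ?thesis using closedin_closed_subtopology[OF clS] by blast
    qed
    define Q where "Q = Uy - \<Union>(\<D> - {D0})"
    have Qopen: "openin X Q"
    proof -
      have "closedin X (\<Union>(\<D> - {D0}))" using finD clDs by (intro closedin_Union) auto
      then show ?thesis unfolding Q_def using Uy by (simp add: openin_diff)
    qed
    have yQ: "y \<in> Q"
    proof -
      have "y \<notin> D" if "D \<in> \<D> - {D0}" for D
      proof
        assume yD: "y \<in> D"
        have "D \<in> connected_components_of ?Y" using that unfolding \<D>_def by blast
        then have "connected_component_of_set ?Y y = D" using yD by (rule comp_eq_of_mem)
        then show False using that D0_def by blast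
      qed
      then show ?thesis unfolding Q_def using y by blast
    qed
    have QD0: "Q \<subseteq> D0"
    proof
      fix q assume qQ: "q \<in> Q"
      then have qUy: "q \<in> Uy" unfolding Q_def by blast
      have qX: "q \<in> topspace X" using qUy Uy openin_subset by blast
      have qS: "q \<in> ?S" using qX qUy dis by blast
      define Dq where "Dq = connected_component_of_set ?Y q"
      have Dqcomp: "Dq \<in> connected_components_of ?Y"
      proof -
        have "q \<in> topspace ?Y" using qS by simp
        then show ?thesis unfolding Dq_def by (simp only: connected_component_in_connected_components_of)
      qed
      have qDq: "q \<in> Dq" unfolding Dq_def using qS connected_component_of_refl[of ?Y q] by simp
      have "Dq \<in> \<D>" unfolding \<D>_def using Dqcomp qDq qUy by blast
      then have "Dq = D0" using qQ qDq unfolding Q_def by blast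
      then show "q \<in> D0" using qDq by blast
    qed
    have D0S: "D0 \<subseteq> ?S" using connected_component_of_subset_topspace[of ?Y y] unfolding D0_def by auto
    have cD0: "connectedin X D0"
      using connectedin_connected_component_of[of ?Y y] unfolding D0_def by (simp add: connectedin_subtopology)
    have clD0: "closedin X D0" using D0D by (rule clDs)
    have "continuum_in X D0"
      unfolding continuum_in_def
      using D0S yD0 cD0 closedin_compact_space[OF assms(2) clD0] by blast
    moreover have "D0 \<subseteq> topspace X - {x}" using D0S x by blast
    ultimately show False using noQW Qopen yQ QD0 by blast
  qed
qed

end
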